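(* Let $\mathbf{HC}=(h_n)_{n\ge 0}$ be the infinite Hilbert curve direction word defined in the context. Let $M$ be the deterministic finite automaton with output with state set $\{0,1,\dots,7\}$, input alphabet $\{0,1,2,3\}$, initial state $0$, and transition function $\delta$ and output function $\tau$ given by the following table (row $q$ lists $\delta(q,0),\delta(q,1),\delta(q,2),\delta(q,3)$ and then $\tau(q)$): $0: 0,1,2,3;\ \mathtt{U}$; $1: 1,0,4,5;\ \mathtt{R}$; $2: 1,0,4,6;\ \mathtt{D}$; $3: 7,6,5,0;\ \mathtt{R}$; $4: 0,1,2,7;\ \mathtt{L}$; $5: 6,7,3,1;\ \mathtt{U}$; $6: 6,7,3,2;\ \mathtt{L}$; $7: 7,6,5,4;\ \mathtt{D}$. Then for every $n\ge 0$, $h_n=\tau(\delta(0,(n)_4))$, where $(n)_4$ is the canonical base-$4$ representation of $n$ (most significant digit first, $(0)_4$ the empty word) and $\delta$ is extended to words in the usual way. In particular $\mathbf{HC}$ is $4$-automatic.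
   Context: Directions are letters of the alphabet $\{\mathtt{U},\mathtt{D},\mathtt{R},\mathtt{L}\}$ (up, down, right, left). Let $t_D$ be the letter-to-letter morphism with $t_D(\mathtt{U})=\mathtt{R}$, $t_D(\mathtt{D})=\mathtt{L}$, $t_D(\mathtt{R})=\mathtt{U}$, $t_D(\mathtt{L})=\mathtt{D}$ (flip about the main diagonal), and $t_H$ the morphism with $t_H(\mathtt{U})=\mathtt{D}$, $t_H(\mathtt{D})=\mathtt{U}$, $t_H(\mathtt{R})=\mathtt{L}$, $t_H(\mathtt{L})=\mathtt{R}$ ($180^\circ$ rotation). Define words $A_n$ by $A_0=\epsilon$ (empty word) and, for $n\ge 0$, $A_{2n+1}=A_{2n}\,\mathtt{U}\,t_D(A_{2n})\,\mathtt{R}\,t_D(A_{2n})\,\mathtt{D}\,t_H(A_{2n})$, $A_{2n+2}=A_{2n+1}\,\mathtt{R}\,t_D(A_{2n+1})\,\mathtt{U}\,t_D(A_{2n+1})\,\mathtt{L}\,t_H(A_{2n+1})$. Each $A_n$ is a prefix of $A_{n+1}$, and $\mathbf{HC}=h_0h_1h_2\cdots$ is the unique infinite word having every $A_n$ as a prefix (so $\mathbf{HC}=\mathtt{URDRRULURULLD}\cdots$). *)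

theory Defs
  imports Main
begin

datatype dir = U | D | R | L

fun tD :: "dir \<Rightarrow> dir" where
  "tD U = R" | "tD D = L" | "tD R = U" | "tD L = D"

fun tH :: "dir \<Rightarrow> dir" where
  "tH U = D" | "tH D = U" | "tH R = L" | "tH L = R"

fun A :: "nat \<Rightarrow> dir list" where
  "A 0 = []"
| "A (Suc n) =
     (if even n
      then A n @ [U] @ map tD (A n) @ [R] @ map tD (A n) @ [D] @ map tH (A n)
      else A n @ [R] @ map tD (A n) @ [U] @ map tD (A n) @ [L] @ map tH (A n))"

definition HC :: "nat \<Rightarrow> dir" where
  "HC = (THE w. \<forall>n. \<forall>i < length (A n). w i = A n ! i)"

fun base4 :: "nat \<Rightarrow> nat list" where
  "base4 n = (if n = 0 then [] else base4 (n div 4) @ [n mod 4])"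

definition delta_table :: "nat list list" where
  "delta_table = [[0,1,2,3],[1,0,4,5],[1,0,4,6],[7,6,5,0],
                  [0,1,2,7],[6,7,3,1],[6,7,3,2],[7,6,5,4]]"

definition delta :: "nat \<Rightarrow> nat \<Rightarrow> nat" where
  "delta q a = delta_table ! q ! a"

definition delta_star :: "nat \<Rightarrow> nat list \<Rightarrow> nat" where
  "delta_star q w = foldl delta q w"

definition tau :: "nat \<Rightarrow> dir" where
  "tau q = [U, R, D, R, L, U, L, D] ! q"

end

theory Submission
  imports Defs
begin

declare base4.simps[simp del]

lemma tD_tD[simp]: "tD (tD x) = x" by (cases x) auto
lemma tH_tH[simp]: "tH (tH x) = x" by (cases x) auto
lemma tH_tD[simp]: "tH (tD x) = tD (tH x)" by (cases x) auto

lemma len_A: "length (A m) = 4 ^ m - 1"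
proof (induction m)
  case 0 then show ?case by simp
next
  case (Suc m)
  have "(1::nat) \<le> 4 ^ m" by simp
  with Suc show ?case by auto
qed

definition gq :: "nat \<Rightarrow> dir \<Rightarrow> dir" where
  "gq q = [id, tD, tD, tH, id, tD \<circ> tH, tD \<circ> tH, tH] ! q"

definition sq :: "nat \<Rightarrow> nat \<Rightarrow> dir" where
  "sq q m = (if even m then [U,R,D,R,L,U,L,D] else [R,U,L,U,D,R,D,L]) ! q"

definition P :: "nat \<Rightarrow> nat \<Rightarrow> dir list" where
  "P q m = map (gq q) (A m) @ [sq q m]"

lemma len_P: "length (P q m) = 4 ^ m"
proof -
  have "(1::nat) \<le> 4 ^ m" by simp
  then show ?thesis unfolding P_def by (simp add: len_A)
qed

lemma P_rec:
  assumes "q < 8"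
  shows "P q (Suc m) = P (delta q 0) m @ P (delta q 1) m @ P (delta q 2) m @ P (delta q 3) m"
proof -
  have q: "q = 0 \<or> q = 1 \<or> q = 2 \<or> q = 3 \<or> q = 4 \<or> q = 5 \<or> q = 6 \<or> q = 7"
    using assms by auto
  show ?thesis
  proof (cases "even m")
    case True
    then show ?thesis using q
      by (elim disjE) (simp_all add: P_def gq_def sq_def delta_def delta_table_def o_def)
  next
    case False
    then show ?thesis using q
      by (elim disjE) (simp_all add: P_def gq_def sq_def delta_def delta_table_def o_def)
  qed
qed

lemma delta_lt: "q < 8 \<Longrightarrow> a < 4 \<Longrightarrow> delta q a < 8"
proof -
  assume "q < 8" "a < 4"
  then have "q = 0 \<or> q = 1 \<or> q = 2 \<or> q = 3 \<or> q = 4 \<or> q = 5 \<or> q = 6 \<or> q = 7"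
      "a = 0 \<or> a = 1 \<or> a = 2 \<or> a = 3" by auto
  then show ?thesis by (elim disjE) (simp_all add: delta_def delta_table_def)
qed

fun val4 :: "nat list \<Rightarrow> nat" where
  "val4 [] = 0"
| "val4 (d # w) = d * 4 ^ length w + val4 w"

lemma val4_lt: "\<forall>d\<in>set w. d < 4 \<Longrightarrow> val4 w < 4 ^ length w"
proof (induction w)
  case Nil then show ?case by simp
next
  case (Cons d w)
  then have "d \<le> 3" "val4 w + 1 \<le> 4 ^ length w" by auto
  then have "d * 4 ^ length w + val4 w < 3 * 4 ^ length w + 4 ^ length w"
    using mult_le_mono1[of d 3 "4 ^ length w"] by linarith
  then show ?case by simp
qed

lemma main_gen:
  "\<forall>d\<in>set w. d < 4 \<Longrightarrow> q < 8 \<Longrightarrow> tau (delta_star q w) = P q (length w) ! val4 w"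
proof (induction w arbitrary: q)
  case Nil
  have "q = 0 \<or> q = 1 \<or> q = 2 \<or> q = 3 \<or> q = 4 \<or> q = 5 \<or> q = 6 \<or> q = 7"
    using Nil by auto
  then show ?case
    by (elim disjE) (simp_all add: P_def sq_def tau_def delta_star_def)
next
  case (Cons j w)
  let ?m = "length w"
  have j: "j < 4" using Cons by auto
  have IH: "tau (delta_star (delta q j) w) = P (delta q j) ?m ! val4 w"
    using Cons delta_lt j by auto
  have v: "val4 w < 4 ^ ?m" using Cons val4_lt by auto
  have ds: "delta_star q (j # w) = delta_star (delta q j) w" by (simp add: delta_star_def)
  have jj: "j = 0 \<or> j = 1 \<or> j = 2 \<or> j = 3" using j by auto
  have "P q (Suc ?m) ! (j * 4 ^ ?m + val4 w) = P (delta q j) ?m ! val4 w"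
    using jj v by (elim disjE) (simp_all add: P_rec[OF Cons.prems(2)] nth_append len_P)
  then show ?case using IH ds by simp
qed

lemma val4_snoc: "val4 (w @ [d]) = 4 * val4 w + d"
  by (induction w) (auto simp: algebra_simps)

lemma base4_val: "val4 (base4 n) = n"
proof (induction n rule: base4.induct)
  case (1 n)
  then show ?case by (subst base4.simps) (auto simp: val4_snoc)
qed

lemma base4_digits: "\<forall>d\<in>set (base4 n). d < 4"
proof (induction n rule: base4.induct)
  case (1 n)
  then show ?case by (subst base4.simps) auto
qed

lemma base4_len: "n < 4 ^ m \<Longrightarrow> length (base4 n) \<le> m"
proof (induction m arbitrary: n)
  case 0
  then show ?case by (subst base4.simps) auto
next
  case (Suc m)
  have "n div 4 < 4 ^ m" using Suc.prems by auto
  then have "length (base4 (n div 4)) \<le> m" using Suc.IH by blast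
  then show ?case by (subst base4.simps) auto
qed

lemma val4_pad: "val4 (replicate k 0 @ w) = val4 w"
  by (induction k) auto

lemma foldl_zero: "foldl delta 0 (replicate k 0) = 0"
  by (induction k) (auto simp: delta_def delta_table_def)

lemma ds_pad: "delta_star 0 (replicate k 0 @ w) = delta_star 0 w"
  by (simp add: delta_star_def foldl_zero)

lemma W_prop:
  assumes "i < length (A m)"
  shows "tau (delta_star 0 (base4 i)) = A m ! i"
proof -
  have im: "i < 4 ^ m" using assms len_A by auto
  define w where "w = replicate (m - length (base4 i)) 0 @ base4 i"
  have lw: "length w = m" using base4_len[OF im] by (simp add: w_def)
  have dw: "\<forall>d\<in>set w. d < 4" using base4_digits by (auto simp: w_def)
  have "tau (delta_star 0 (base4 i)) = tau (delta_star 0 w)" by (simp add: w_def ds_pad)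
  also have "\<dots> = P 0 m ! val4 w" using main_gen[OF dw] lw by simp
  also have "\<dots> = P 0 m ! i" by (simp add: w_def val4_pad base4_val)
  also have "\<dots> = A m ! i" using assms by (simp add: P_def gq_def nth_append)
  finally show ?thesis .
qed

theorem mainTheorem1:
  shows "\<forall>n::nat. HC n = tau (delta_star 0 (base4 n))"
proof -
  let ?W = "\<lambda>n. tau (delta_star 0 (base4 n))"
  have ex: "\<forall>n. \<forall>i < length (A n). ?W i = A n ! i" using W_prop by blast
  have cov: "i < length (A (Suc i))" for i
  proof -
    have "i < 4 ^ i" by (induction i) auto
    also have "4 ^ i + 1 \<le> (4::nat) ^ Suc i" by simp
    finally show ?thesis by (simp add: len_A)
  qed
  have "HC = ?W"
    unfolding HC_def
  proof (rule the_equality)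
    show "\<forall>n. \<forall>i < length (A n). ?W i = A n ! i" by (rule ex)
  next
    fix w assume h: "\<forall>n. \<forall>i < length (A n). w i = A n ! i"
    show "w = ?W"
    proof
      fix i
      show "w i = ?W i" using h ex cov by metis
    qed
  qed
  then show ?thesis by (metis)
qed

end
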